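(* Let $L$ be an interval locale with top element $1$, and for a presheaf $F$ on $L$ and $x\in L\setminus\{1\}$ set $F_x=\varinjlim_{x<s}F(s)$. Then: (1) the associated sheaf map $\eta:F\to L^2F$ induces bijections $F_x\to(L^2F)_x$ for all $x\in L\setminus\{1\}$; (2) a map $E\to F$ of presheaves on $L$ induces bijections $E_x\to F_x$ for all $x\in L\setminus\{1\}$ if and only if the induced map $L^2E\to L^2F$ of associated sheaves is an isomorphism.
   Context: A locale $L$ is a complete lattice in which finite meets distribute over arbitrary joins, with Grothendieck topology: $\{b_j\le a\}$ covers $a$ iff $\bigvee_j b_j=a$; presheaves are functors $L^{op}\to\mathbf{Set}$, sheaves are presheaves $F$ with $F(a)\to\varprojlim_{b\in R}F(b)$ bijective for all covering sieves $R$ of $a$. $L$ is an interval if it is totally ordered and densely ordered ($a<b$ implies some $s$ with $a<s<b$). $L^2$ denotes the associated sheaf functor from presheaves to sheaves on $L$ and $\eta:F\to L^2F$ the canonical map. *)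

theory Defs
  imports Main
begin

text \<open>The locale L is modelled as a type 'a of class complete_linorder (a totally ordered
complete lattice, hence automatically a frame) which is also dense_order.
A presheaf on L is a pair (P, R): P a is the set of sections over a, and
R a b : P a -> P b is restriction for b <= a.\<close>

type_synonym ('a, 'b) psh = "('a \<Rightarrow> 'b set) \<times> ('a \<Rightarrow> 'a \<Rightarrow> 'b \<Rightarrow> 'b)"

definition presheaf :: "('a::order, 'b) psh \<Rightarrow> bool" where
  "presheaf F \<longleftrightarrow>
     (\<forall>a b u. b \<le> a \<longrightarrow> u \<in> fst F a \<longrightarrow> snd F a b u \<in> fst F b) \<and>
     (\<forall>a u. u \<in> fst F a \<longrightarrow> snd F a a u = u) \<and>
     (\<forall>a b c u. c \<le> b \<longrightarrow> b \<le> a \<longrightarrow> u \<in> fst F a \<longrightarrow>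
        snd F b c (snd F a b u) = snd F a c u)"

definition nat_trans :: "('a::order, 'b) psh \<Rightarrow> ('a, 'c) psh \<Rightarrow> ('a \<Rightarrow> 'b \<Rightarrow> 'c) \<Rightarrow> bool" where
  "nat_trans F G f \<longleftrightarrow> presheaf F \<and> presheaf G \<and>
     (\<forall>a u. u \<in> fst F a \<longrightarrow> f a u \<in> fst G a) \<and>
     (\<forall>a b u. b \<le> a \<longrightarrow> u \<in> fst F a \<longrightarrow> f b (snd F a b u) = snd G a b (f a u))"

definition psh_iso :: "('a::order, 'b) psh \<Rightarrow> ('a, 'c) psh \<Rightarrow> ('a \<Rightarrow> 'b \<Rightarrow> 'c) \<Rightarrow> bool" where
  "psh_iso F G f \<longleftrightarrow> nat_trans F G f \<and>
     (\<exists>g. nat_trans G F g \<and> (\<forall>a u. u \<in> fst F a \<longrightarrow> g a (f a u) = u) \<and>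
          (\<forall>a v. v \<in> fst G a \<longrightarrow> f a (g a v) = v))"

definition sieve :: "'a::complete_lattice \<Rightarrow> 'a set \<Rightarrow> bool" where
  "sieve a S \<longleftrightarrow> S \<subseteq> {..a} \<and> (\<forall>b\<in>S. \<forall>c. c \<le> b \<longrightarrow> c \<in> S)"

definition covering :: "'a::complete_lattice \<Rightarrow> 'a set \<Rightarrow> bool" where
  "covering a S \<longleftrightarrow> sieve a S \<and> Sup S = a"

text \<open>Matching families for F on a covering sieve of a, encoded as partial functions
whose domain is the sieve.\<close>

definition mdom :: "('a \<Rightarrow> 'b option) \<Rightarrow> 'a set" where
  "mdom x = {b. x b \<noteq> None}"

definition matching :: "('a::complete_lattice, 'b) psh \<Rightarrow> 'a \<Rightarrow> ('a \<Rightarrow> 'b option) \<Rightarrow> bool" where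
  "matching F a x \<longleftrightarrow> covering a (mdom x) \<and>
     (\<forall>b\<in>mdom x. the (x b) \<in> fst F b) \<and>
     (\<forall>b\<in>mdom x. \<forall>c. c \<le> b \<longrightarrow> snd F b c (the (x b)) = the (x c))"

text \<open>Two matching families are identified in the colimit over covering sieves iff they
agree on a common smaller covering sieve.\<close>

definition mf_eq :: "'a::complete_lattice \<Rightarrow> ('a \<Rightarrow> 'b option) \<Rightarrow> ('a \<Rightarrow> 'b option) \<Rightarrow> bool" where
  "mf_eq a x y \<longleftrightarrow> (\<exists>T. covering a T \<and> T \<subseteq> mdom x \<inter> mdom y \<and> (\<forall>b\<in>T. x b = y b))"

definition mf_class :: "('a::complete_lattice, 'b) psh \<Rightarrow> 'a \<Rightarrow> ('a \<Rightarrow> 'b option) \<Rightarrow> ('a \<Rightarrow> 'b option) set" where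
  "mf_class F a x = {y. matching F a y \<and> mf_eq a x y}"

text \<open>The plus construction L F: L F (a) = colim over covering sieves R of a of lim_{b in R} F(b).\<close>

definition plus_obj :: "('a::complete_lattice, 'b) psh \<Rightarrow> 'a \<Rightarrow> ('a \<Rightarrow> 'b option) set set" where
  "plus_obj F a = {X. \<exists>x. matching F a x \<and> X = mf_class F a x}"

definition mf_res :: "'a::order \<Rightarrow> ('a \<Rightarrow> 'b option) \<Rightarrow> ('a \<Rightarrow> 'b option)" where
  "mf_res b x = (\<lambda>c. if c \<le> b then x c else None)"

definition plus_res :: "('a::complete_lattice, 'b) psh \<Rightarrow> 'a \<Rightarrow> 'a \<Rightarrow>
    ('a \<Rightarrow> 'b option) set \<Rightarrow> ('a \<Rightarrow> 'b option) set" where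
  "plus_res F a b X = (\<Union>x\<in>X. mf_class F b (mf_res b x))"

definition Lplus :: "('a::complete_lattice, 'b) psh \<Rightarrow> ('a, ('a \<Rightarrow> 'b option) set) psh" where
  "Lplus F = (plus_obj F, plus_res F)"

definition plus_unit :: "('a::complete_lattice, 'b) psh \<Rightarrow> 'a \<Rightarrow> 'b \<Rightarrow> ('a \<Rightarrow> 'b option) set" where
  "plus_unit F a u = mf_class F a (\<lambda>b. if b \<le> a then Some (snd F a b u) else None)"

definition plus_map :: "('a::complete_lattice, 'c) psh \<Rightarrow> ('a \<Rightarrow> 'b \<Rightarrow> 'c) \<Rightarrow> 'a \<Rightarrow>
    ('a \<Rightarrow> 'b option) set \<Rightarrow> ('a \<Rightarrow> 'c option) set" where
  "plus_map G f a X = (\<Union>x\<in>X. mf_class G a (\<lambda>b. map_option (f b) (x b)))"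

definition L2 :: "('a::complete_lattice, 'b) psh \<Rightarrow> ('a, ('a \<Rightarrow> ('a \<Rightarrow> 'b option) set option) set) psh" where
  "L2 F = Lplus (Lplus F)"

definition eta :: "('a::complete_lattice, 'b) psh \<Rightarrow> 'a \<Rightarrow> 'b \<Rightarrow> ('a \<Rightarrow> ('a \<Rightarrow> 'b option) set option) set" where
  "eta F a u = plus_unit (Lplus F) a (plus_unit F a u)"

definition L2_map :: "('a::complete_lattice, 'c) psh \<Rightarrow> ('a \<Rightarrow> 'b \<Rightarrow> 'c) \<Rightarrow> 'a \<Rightarrow>
    ('a \<Rightarrow> ('a \<Rightarrow> 'b option) set option) set \<Rightarrow> ('a \<Rightarrow> ('a \<Rightarrow> 'c option) set option) set" where
  "L2_map G f = plus_map (Lplus G) (plus_map G f)"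

text \<open>Stalks F_x = colim_{x < s} F(s), as equivalence classes (germs) of pairs (s, u).\<close>

definition germ :: "('a::order, 'b) psh \<Rightarrow> 'a \<Rightarrow> 'a \<Rightarrow> 'b \<Rightarrow> ('a \<times> 'b) set" where
  "germ F x s u = {(t, v). x < t \<and> v \<in> fst F t \<and>
      (\<exists>r. x < r \<and> r \<le> s \<and> r \<le> t \<and> snd F s r u = snd F t r v)}"

definition stalk :: "('a::order, 'b) psh \<Rightarrow> 'a \<Rightarrow> ('a \<times> 'b) set set" where
  "stalk F x = {C. \<exists>s u. x < s \<and> u \<in> fst F s \<and> C = germ F x s u}"

definition stalk_map :: "('a::order, 'c) psh \<Rightarrow> ('a \<Rightarrow> 'b \<Rightarrow> 'c) \<Rightarrow> 'a \<Rightarrow>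
    ('a \<times> 'b) set \<Rightarrow> ('a \<times> 'c) set" where
  "stalk_map G f x C = (\<Union>(s, u)\<in>C. germ G x s (f s u))"

end

theory Submission
  imports Defs
begin

lemma psh_cl: "presheaf G \<Longrightarrow> b \<le> a \<Longrightarrow> u \<in> fst G a \<Longrightarrow> snd G a b u \<in> fst G b"
  unfolding presheaf_def by blast
lemma psh_id: "presheaf G \<Longrightarrow> u \<in> fst G a \<Longrightarrow> snd G a a u = u"
  unfolding presheaf_def by blast
lemma psh_comp: "presheaf G \<Longrightarrow> c \<le> b \<Longrightarrow> b \<le> a \<Longrightarrow> u \<in> fst G a \<Longrightarrow>
    snd G b c (snd G a b u) = snd G a c u"
  unfolding presheaf_def by blast
lemma nt_ps1: "nat_trans G H h \<Longrightarrow> presheaf G" unfolding nat_trans_def by blast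
lemma nt_ps2: "nat_trans G H h \<Longrightarrow> presheaf H" unfolding nat_trans_def by blast
lemma nt_in: "nat_trans G H h \<Longrightarrow> u \<in> fst G a \<Longrightarrow> h a u \<in> fst H a"
  unfolding nat_trans_def by blast
lemma nt_nat: "nat_trans G H h \<Longrightarrow> b \<le> a \<Longrightarrow> u \<in> fst G a \<Longrightarrow>
    h b (snd G a b u) = snd H a b (h a u)"
  unfolding nat_trans_def by blast
lemma match_val: "matching G b x \<Longrightarrow> x c \<noteq> None \<Longrightarrow> the (x c) \<in> fst G c"
  unfolding matching_def mdom_def by blast
lemma match_comp: "matching G b x \<Longrightarrow> x c' \<noteq> None \<Longrightarrow> c \<le> c' \<Longrightarrow>
    snd G c' c (the (x c')) = the (x c)"
  unfolding matching_def mdom_def by blast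

lemma match_down: "matching G a x \<Longrightarrow> x b \<noteq> None \<Longrightarrow> c \<le> b \<Longrightarrow> x c \<noteq> None"
proof -
  assume "matching G a x" "x b \<noteq> None" "c \<le> b"
  then have "sieve a (mdom x)" "b \<in> mdom x" by (auto simp: matching_def covering_def mdom_def)
  then have "c \<in> mdom x" using \<open>c \<le> b\<close> unfolding sieve_def by blast
  then show ?thesis by (simp add: mdom_def)
qed

lemma UN_const: "(\<And>z. z \<in> A \<Longrightarrow> f z = K) \<Longrightarrow> a \<in> A \<Longrightarrow> (\<Union>z\<in>A. f z) = K"
  by blast

section \<open>Covering sieves\<close>

lemma Sup_lt_dense: "Sup {..<(y::'a::{complete_linorder,dense_order})} = y"
proof (rule Sup_eqI)
  show "\<And>x. x \<in> {..<y} \<Longrightarrow> x \<le> y" by auto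
  fix z assume h: "\<And>x. x \<in> {..<y} \<Longrightarrow> x \<le> z"
  show "y \<le> z"
  proof (rule ccontr)
    assume "\<not> y \<le> z"
    then have "z < y" by auto
    then obtain w where "z < w" "w < y" using dense by blast
    with h[of w] show False by auto
  qed
qed

lemma cov_ge: "covering (b::'a::complete_linorder) T \<Longrightarrow> {..<b} \<subseteq> T"
proof
  fix c assume cv: "covering b T" and "c \<in> {..<b}"
  then have "c < Sup T" by (auto simp: covering_def)
  then obtain t where "t \<in> T" "c < t" by (auto simp: less_Sup_iff)
  with cv show "c \<in> T" by (auto simp: covering_def sieve_def)
qed

lemma cov_le: "covering b T \<Longrightarrow> T \<subseteq> {..b}"
  by (auto simp: covering_def sieve_def)

lemma cov_lt: "covering (b::'a::{complete_linorder,dense_order}) {..<b}"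
  by (auto simp: covering_def sieve_def Sup_lt_dense)

lemma cov_at: "covering (b::'a::complete_linorder) {..b}"
  by (auto simp: covering_def sieve_def)

section \<open>Matching families and classes\<close>

lemma match_dom: "matching G (b::'a::complete_linorder) x \<Longrightarrow> c < b \<Longrightarrow> x c \<noteq> None"
  using cov_ge[of b "mdom x"] by (auto simp: matching_def mdom_def)

lemma match_dom2: "matching G b x \<Longrightarrow> x c \<noteq> None \<Longrightarrow> c \<le> b"
  using cov_le[of b "mdom x"] by (auto simp: matching_def mdom_def)

lemma mf_eq_iff:
  assumes "matching G (b::'a::{complete_linorder,dense_order}) x" "matching G b y"
  shows "mf_eq b x y \<longleftrightarrow> (\<forall>c<b. x c = y c)"
proof
  assume "mf_eq b x y"
  then obtain T where "covering b T" "\<forall>c\<in>T. x c = y c" by (auto simp: mf_eq_def)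
  then show "\<forall>c<b. x c = y c" using cov_ge[of b T] by auto
next
  assume "\<forall>c<b. x c = y c"
  moreover have "{..<b} \<subseteq> mdom x \<inter> mdom y"
    using match_dom[OF assms(1)] match_dom[OF assms(2)] by (auto simp: mdom_def)
  ultimately show "mf_eq b x y" unfolding mf_eq_def using cov_lt[of b] by blast
qed

lemma mem_class: "matching G (b::'a::{complete_linorder,dense_order}) x \<Longrightarrow> x \<in> mf_class G b x"
  by (auto simp: mf_class_def mf_eq_iff)

lemma class_eq_iff:
  assumes "matching G (b::'a::{complete_linorder,dense_order}) x" "matching G b y"
  shows "mf_class G b x = mf_class G b y \<longleftrightarrow> (\<forall>c<b. x c = y c)"
proof
  assume "mf_class G b x = mf_class G b y"
  then have "y \<in> mf_class G b x" using mem_class[OF assms(2)] by simp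
  then show "\<forall>c<b. x c = y c" using assms by (auto simp: mf_class_def mf_eq_iff)
next
  assume h: "\<forall>c<b. x c = y c"
  show "mf_class G b x = mf_class G b y"
    using assms h by (auto simp: mf_class_def mf_eq_iff)
qed

lemma mem_class_iff:
  assumes "matching G (b::'a::{complete_linorder,dense_order}) x"
  shows "z \<in> mf_class G b x \<longleftrightarrow> matching G b z \<and> (\<forall>c<b. x c = z c)"
  using assms by (auto simp: mf_class_def mf_eq_iff)

lemma match_res:
  assumes m: "matching G (a::'a::complete_linorder) y" and ba: "b \<le> a"
  shows "matching G b (mf_res b y)"
proof -
  have md: "mdom (mf_res b y) = {c. c \<le> b \<and> y c \<noteq> None}"
    by (auto simp: mdom_def mf_res_def)
  have cov: "covering b (mdom (mf_res b y))"
  proof (cases "b < a")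
    case True
    then have "mdom (mf_res b y) = {..b}" using md match_dom[OF m] by auto
    then show ?thesis using cov_at by simp
  next
    case False
    then have "b = a" using ba by auto
    then have "mdom (mf_res b y) = mdom y" using md match_dom2[OF m] by (auto simp: mdom_def)
    then show ?thesis using m \<open>b = a\<close> by (simp add: matching_def)
  qed
  show ?thesis using m cov unfolding matching_def
    by (auto simp: mdom_def mf_res_def)
qed

lemma plus_res_class:
  assumes m: "matching G (a::'a::{complete_linorder,dense_order}) y" and ba: "b \<le> a"
  shows "plus_res G a b (mf_class G a y) = mf_class G b (mf_res b y)"
proof -
  have "\<And>z. z \<in> mf_class G a y \<Longrightarrow> mf_class G b (mf_res b z) = mf_class G b (mf_res b y)"
  proof -
    fix z assume "z \<in> mf_class G a y"
    then have mz: "matching G a z" and e: "\<forall>c<a. y c = z c" using mem_class_iff[OF m] by auto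
    show "mf_class G b (mf_res b z) = mf_class G b (mf_res b y)"
      using class_eq_iff[OF match_res[OF mz ba] match_res[OF m ba]] e ba
      by (auto simp: mf_res_def)
  qed
  then show ?thesis unfolding plus_res_def using mem_class[OF m] by blast
qed

lemma res_res: "c \<le> b \<Longrightarrow> mf_res c (mf_res b x) = mf_res c x"
  by (auto simp: mf_res_def fun_eq_iff)

lemma res_self: "matching G a x \<Longrightarrow> mf_res a x = x"
proof
  fix c assume m: "matching G a x"
  show "mf_res a x c = x c"
  proof (cases "c \<le> a")
    case False
    then have "x c = None" using match_dom2[OF m, of c] by blast
    then show ?thesis by (simp add: mf_res_def)
  qed (simp add: mf_res_def)
qed

lemma presheaf_Lplus: "presheaf (Lplus (G::('a::{complete_linorder,dense_order}, 'b) psh))"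
  unfolding presheaf_def Lplus_def fst_conv snd_conv plus_obj_def
proof (intro conjI allI impI)
  fix a b :: 'a and X
  assume "b \<le> a" "X \<in> {X. \<exists>x. matching G a x \<and> X = mf_class G a x}"
  then show "plus_res G a b X \<in> {X. \<exists>x. matching G b x \<and> X = mf_class G b x}"
    using plus_res_class match_res by blast
next
  fix a :: 'a and X
  assume "X \<in> {X. \<exists>x. matching G a x \<and> X = mf_class G a x}"
  then obtain x where m: "matching G a x" and X: "X = mf_class G a x" by auto
  show "plus_res G a a X = X" unfolding X plus_res_class[OF m order_refl] res_self[OF m] ..
next
  fix a b c :: 'a and X
  assume cb: "c \<le> b" and ba: "b \<le> a" and "X \<in> {X. \<exists>x. matching G a x \<and> X = mf_class G a x}"
  then obtain x where m: "matching G a x" and X: "X = mf_class G a x" by auto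
  have ca: "c \<le> a" using cb ba by (rule order_trans)
  show "plus_res G b c (plus_res G a b X) = plus_res G a c X"
    unfolding X plus_res_class[OF m ba] plus_res_class[OF match_res[OF m ba] cb]
      plus_res_class[OF m ca] res_res[OF cb] ..
qed

definition full :: "('a::order, 'b) psh \<Rightarrow> 'a \<Rightarrow> 'b \<Rightarrow> 'a \<Rightarrow> 'b option" where
  "full G a u = (\<lambda>b. if b \<le> a then Some (snd G a b u) else None)"

lemma match_full:
  assumes p: "presheaf G" and u: "u \<in> fst G (a::'a::complete_linorder)"
  shows "matching G a (full G a u)"
  unfolding matching_def
proof (intro conjI ballI allI impI)
  have "mdom (full G a u) = {..a}" by (auto simp: mdom_def full_def)
  then show "covering a (mdom (full G a u))" using cov_at by simp
next
  fix b assume "b \<in> mdom (full G a u)"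
  then have "b \<le> a" by (auto simp: mdom_def full_def split: if_splits)
  then show "the (full G a u b) \<in> fst G b" using p u by (simp add: full_def presheaf_def)
next
  fix b c assume "b \<in> mdom (full G a u)" "c \<le> b"
  then have "b \<le> a" "c \<le> a" by (auto simp: mdom_def full_def split: if_splits)
  then show "snd G b c (the (full G a u b)) = the (full G a u c)"
    using p u \<open>c \<le> b\<close> by (simp add: full_def presheaf_def)
qed

lemma res_full: "presheaf G \<Longrightarrow> u \<in> fst G a \<Longrightarrow> b \<le> a \<Longrightarrow>
    mf_res b (full G a u) = full G b (snd G a b u)"
proof
  fix c assume p: "presheaf G" and u: "u \<in> fst G a" and ba: "b \<le> a"
  show "mf_res b (full G a u) c = full G b (snd G a b u) c"
  proof (cases "c \<le> b")
    case True
    then have "c \<le> a" using ba by (rule order_trans)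
    then show ?thesis using True p u ba by (simp add: mf_res_def full_def presheaf_def)
  qed (simp add: mf_res_def full_def)
qed

lemma plus_unit_full: "plus_unit G a u = mf_class G a (full G a u)"
  by (simp add: plus_unit_def full_def)

lemma unit_obj: "presheaf G \<Longrightarrow> u \<in> fst G (a::'a::{complete_linorder,dense_order}) \<Longrightarrow>
    plus_unit G a u \<in> plus_obj G a"
  unfolding plus_unit_full plus_obj_def by (rule CollectI, rule exI[of _ "full G a u"]) (simp add: match_full)

lemma unit_res: "presheaf G \<Longrightarrow> u \<in> fst G (a::'a::{complete_linorder,dense_order}) \<Longrightarrow> b \<le> a \<Longrightarrow>
    plus_res G a b (plus_unit G a u) = plus_unit G b (snd G a b u)"
  unfolding plus_unit_full by (simp add: plus_res_class[OF match_full] res_full)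

lemma nat_unit: "presheaf (G::('a::{complete_linorder,dense_order}, 'b) psh) \<Longrightarrow>
    nat_trans G (Lplus G) (plus_unit G)"
  unfolding nat_trans_def Lplus_def fst_conv snd_conv
  using presheaf_Lplus[of G, unfolded Lplus_def] unit_obj[of G] unit_res[of G] by simp

section \<open>Functoriality\<close>

definition mapf :: "('a \<Rightarrow> 'b \<Rightarrow> 'c) \<Rightarrow> ('a \<Rightarrow> 'b option) \<Rightarrow> 'a \<Rightarrow> 'c option" where
  "mapf h x = (\<lambda>b. map_option (h b) (x b))"

lemma match_mapf:
  assumes n: "nat_trans G H h" and m: "matching G a x"
  shows "matching H a (mapf h x)"
proof -
  have md: "mdom (mapf h x) = mdom x" by (auto simp: mdom_def mapf_def)
  show ?thesis unfolding matching_def md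
  proof (intro conjI ballI allI impI)
    show "covering a (mdom x)" using m by (simp add: matching_def)
  next
    fix b assume b: "b \<in> mdom x"
    then have xb: "x b \<noteq> None" by (simp add: mdom_def)
    show "the (mapf h x b) \<in> fst H b" using xb nt_in[OF n match_val[OF m xb]]
      by (auto simp: mapf_def)
  next
    fix b c assume b: "b \<in> mdom x" and cb: "c \<le> b"
    then have xb: "x b \<noteq> None" by (simp add: mdom_def)
    have xc: "x c \<noteq> None" using match_down[OF m xb cb] .
    have "snd H b c (h b (the (x b))) = h c (the (x c))"
      using nt_nat[OF n cb match_val[OF m xb]] match_comp[OF m xb cb] by simp
    then show "snd H b c (the (mapf h x b)) = the (mapf h x c)" using xb xc by (auto simp: mapf_def)
  qed
qed

lemma plus_map_class:
  assumes n: "nat_trans G H h" and m: "matching G (a::'a::{complete_linorder,dense_order}) x"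
  shows "plus_map H h a (mf_class G a x) = mf_class H a (mapf h x)"
proof -
  have "\<And>z. z \<in> mf_class G a x \<Longrightarrow> mf_class H a (mapf h z) = mf_class H a (mapf h x)"
  proof -
    fix z assume "z \<in> mf_class G a x"
    then have mz: "matching G a z" and e: "\<forall>c<a. x c = z c" using mem_class_iff[OF m] by auto
    have "\<forall>c<a. mapf h z c = mapf h x c" using e by (simp add: mapf_def)
    then show "mf_class H a (mapf h z) = mf_class H a (mapf h x)"
      using class_eq_iff[OF match_mapf[OF n mz] match_mapf[OF n m]] by simp
  qed
  moreover have "plus_map H h a (mf_class G a x) = (\<Union>z\<in>mf_class G a x. mf_class H a (mapf h z))"
    unfolding plus_map_def mapf_def ..
  ultimately show ?thesis using UN_const[OF _ mem_class[OF m]] by metis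
qed

lemma nat_plus_map:
  assumes n: "nat_trans (G::('a::{complete_linorder,dense_order}, 'b) psh) H h"
  shows "nat_trans (Lplus G) (Lplus H) (plus_map H h)"
  unfolding nat_trans_def
proof (intro conjI allI impI)
  show "presheaf (Lplus G)" "presheaf (Lplus H)" by (rule presheaf_Lplus)+
next
  fix a X assume "X \<in> fst (Lplus G) a"
  then obtain x where m: "matching G a x" and X: "X = mf_class G a x" by (auto simp: Lplus_def plus_obj_def)
  show "plus_map H h a X \<in> fst (Lplus H) a"
    unfolding X plus_map_class[OF n m] Lplus_def fst_conv plus_obj_def
    using match_mapf[OF n m] by blast
next
  fix a b X assume ba: "b \<le> a" and "X \<in> fst (Lplus G) a"
  then obtain x where m: "matching G a x" and X: "X = mf_class G a x" by (auto simp: Lplus_def plus_obj_def)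
  have "mf_res b (mapf h x) = mapf h (mf_res b x)" by (auto simp: mf_res_def mapf_def fun_eq_iff)
  then show "plus_map H h b (snd (Lplus G) a b X) = snd (Lplus H) a b (plus_map H h a X)"
    unfolding Lplus_def snd_conv X
    using plus_res_class[OF m ba] plus_map_class[OF n match_res[OF m ba]]
      plus_map_class[OF n m] plus_res_class[OF match_mapf[OF n m] ba] by simp
qed

lemma plus_map_unit:
  assumes n: "nat_trans G H h" and u: "u \<in> fst G (a::'a::{complete_linorder,dense_order})"
  shows "plus_map H h a (plus_unit G a u) = plus_unit H a (h a u)"
proof -
  have p: "presheaf G" using n by (simp add: nat_trans_def)
  have "mapf h (full G a u) = full H a (h a u)"
    using n u unfolding nat_trans_def by (auto simp: mapf_def full_def fun_eq_iff)
  then show ?thesis using plus_map_class[OF n match_full[OF p u]]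
    by (simp add: plus_unit_def full_def)
qed

lemma plus_map_bij:
  fixes G :: "('a::{complete_linorder,dense_order}, 'b) psh" and H :: "('a,'c) psh"
  assumes n: "nat_trans G H h"
  and inj: "\<And>d c u u'. d < c \<Longrightarrow> c < b \<Longrightarrow> u \<in> fst G c \<Longrightarrow> u' \<in> fst G c \<Longrightarrow>
              h c u = h c u' \<Longrightarrow> snd G c d u = snd G c d u'"
  and surj: "\<And>d c w. d < c \<Longrightarrow> c < b \<Longrightarrow> w \<in> fst H c \<Longrightarrow>
              \<exists>r v. d < r \<and> r \<le> c \<and> v \<in> fst G r \<and> h r v = snd H c r w"
  shows "bij_betw (plus_map H h b) (plus_obj G b) (plus_obj H b)"
proof -
  have pG: "presheaf G" using n by (rule nt_ps1)
  have pH: "presheaf H" using n by (rule nt_ps2)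
  have injon: "inj_on (plus_map H h b) (plus_obj G b)"
  proof (rule inj_onI)
    fix X Y assume "X \<in> plus_obj G b" "Y \<in> plus_obj G b" and e: "plus_map H h b X = plus_map H h b Y"
    then obtain x y where mx: "matching G b x" and X: "X = mf_class G b x"
      and my: "matching G b y" and Y: "Y = mf_class G b y" by (auto simp: plus_obj_def)
    have "mf_class H b (mapf h x) = mf_class H b (mapf h y)"
      using e unfolding X Y plus_map_class[OF n mx] plus_map_class[OF n my] .
    then have e2: "\<forall>c<b. mapf h x c = mapf h y c"
      using class_eq_iff[OF match_mapf[OF n mx] match_mapf[OF n my]] by simp
    have "\<forall>d<b. x d = y d"
    proof (intro allI impI)
      fix d assume "d < b"
      then obtain c where dc: "d < c" and cb: "c < b" using dense by blast
      have xc: "x c \<noteq> None" using match_dom[OF mx cb] .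
      have yc: "y c \<noteq> None" using match_dom[OF my cb] .
      have hc: "h c (the (x c)) = h c (the (y c))"
        using e2 cb xc yc by (auto simp: mapf_def)
      have "snd G c d (the (x c)) = snd G c d (the (y c))"
        using inj[OF dc cb match_val[OF mx xc] match_val[OF my yc] hc] .
      then have "the (x d) = the (y d)"
        using match_comp[OF mx xc, of d] match_comp[OF my yc, of d] dc by simp
      moreover have "x d \<noteq> None" "y d \<noteq> None" using match_dom[OF mx] match_dom[OF my] \<open>d < b\<close> by auto
      ultimately show "x d = y d" by auto
    qed
    then show "X = Y" unfolding X Y using class_eq_iff[OF mx my] by simp
  qed
  have img1: "plus_map H h b ` plus_obj G b \<subseteq> plus_obj H b"
  proof
    fix Z assume "Z \<in> plus_map H h b ` plus_obj G b"
    then obtain x where mx: "matching G b x" and Z: "Z = plus_map H h b (mf_class G b x)"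
      by (auto simp: plus_obj_def)
    show "Z \<in> plus_obj H b" unfolding Z plus_map_class[OF n mx] plus_obj_def
      using match_mapf[OF n mx] by blast
  qed
  have img2: "plus_obj H b \<subseteq> plus_map H h b ` plus_obj G b"
  proof
    fix Y assume "Y \<in> plus_obj H b"
    then obtain w where mw: "matching H b w" and Y: "Y = mf_class H b w" by (auto simp: plus_obj_def)
    define P where "P = (\<lambda>d rv. d < fst rv \<and> fst rv < b \<and> snd rv \<in> fst G (fst rv) \<and>
        h (fst rv) (snd rv) = the (w (fst rv)))"
    have ex: "\<exists>rv. P d rv" if db: "d < b" for d
    proof -
      obtain c where dc: "d < c" and cb: "c < b" using dense db by blast
      have wc: "w c \<noteq> None" using match_dom[OF mw cb] .
      obtain r v where r: "d < r" "r \<le> c" "v \<in> fst G r" "h r v = snd H c r (the (w c))"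
        using surj[OF dc cb match_val[OF mw wc]] by blast
      have "h r v = the (w r)" using r(4) match_comp[OF mw wc r(2)] by simp
      moreover have "r < b" using r(2) cb by simp
      ultimately have "P d (r, v)" using r unfolding P_def by simp
      then show ?thesis ..
    qed
    define R where "R = (\<lambda>d. SOME rv. P d rv)"
    have PR: "P d (R d)" if "d < b" for d unfolding R_def using ex[OF that] by (rule someI_ex)
    define z where "z = (\<lambda>d. if d < b then Some (snd G (fst (R d)) d (snd (R d))) else None)"
    have hz: "h d (snd G (fst (R d)) d (snd (R d))) = the (w d)" if db: "d < b" for d
    proof -
      have p: "P d (R d)" using PR[OF db] .
      then have p1: "d \<le> fst (R d)" "snd (R d) \<in> fst G (fst (R d))"
          "h (fst (R d)) (snd (R d)) = the (w (fst (R d)))" unfolding P_def by auto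
      then have "h d (snd G (fst (R d)) d (snd (R d))) = snd H (fst (R d)) d (the (w (fst (R d))))"
        using nt_nat[OF n p1(1) p1(2)] by simp
      also have "\<dots> = the (w d)"
        using match_comp[OF mw match_dom[OF mw], of "fst (R d)" d] p p1(1) unfolding P_def by simp
      finally show ?thesis .
    qed
    have zcomp: "snd G c' c (the (z c')) = the (z c)" if c'b: "c' < b" and cc': "c \<le> c'" for c c'
    proof -
      obtain r v where Rc: "R c = (r, v)" by (cases "R c")
      obtain r' v' where Rc': "R c' = (r', v')" by (cases "R c'")
      have cb: "c < b" using cc' c'b by simp
      have P1: "c < r" "r < b" "v \<in> fst G r" "h r v = the (w r)" using PR[OF cb] Rc unfolding P_def by auto
      have P2: "c' < r'" "r' < b" "v' \<in> fst G r'" "h r' v' = the (w r')" using PR[OF c'b] Rc' unfolding P_def by auto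
      define m where "m = min r r'"
      have cm: "c < m" and mb: "m < b" "m \<le> r" "m \<le> r'" using P1 P2 cc' unfolding m_def
        by (auto simp: min_def)
      have pm: "snd G r m v \<in> fst G m" using psh_cl[OF pG \<open>m \<le> r\<close> P1(3)] .
      have pm': "snd G r' m v' \<in> fst G m" using psh_cl[OF pG \<open>m \<le> r'\<close> P2(3)] .
      have h1: "h m (snd G r m v) = the (w m)"
        using nt_nat[OF n \<open>m \<le> r\<close> P1(3)] P1(4) match_comp[OF mw match_dom[OF mw P1(2)] \<open>m \<le> r\<close>] by simp
      have h2: "h m (snd G r' m v') = the (w m)"
        using nt_nat[OF n \<open>m \<le> r'\<close> P2(3)] P2(4) match_comp[OF mw match_dom[OF mw P2(2)] \<open>m \<le> r'\<close>] by simp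
      have "snd G m c (snd G r m v) = snd G m c (snd G r' m v')"
        using inj[OF cm mb(1) pm pm'] h1 h2 by simp
      then have eq: "snd G r c v = snd G r' c v'"
        using psh_comp[OF pG _ \<open>m \<le> r\<close> P1(3), of c] psh_comp[OF pG _ \<open>m \<le> r'\<close> P2(3), of c] cm by simp
      have "snd G c' c (the (z c')) = snd G c' c (snd G r' c' v')" using c'b Rc' by (simp add: z_def)
      also have "\<dots> = snd G r' c v'" using psh_comp[OF pG cc' _ P2(3)] P2(1) by simp
      also have "\<dots> = snd G r c v" using eq by simp
      also have "\<dots> = the (z c)" using cb Rc by (simp add: z_def)
      finally show ?thesis .
    qed
    have mz: "matching G b z" unfolding matching_def
    proof (intro conjI ballI allI impI)
      have "mdom z = {..<b}" by (auto simp: mdom_def z_def)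
      then show "covering b (mdom z)" using cov_lt by simp
    next
      fix d assume "d \<in> mdom z"
      then have db: "d < b" by (auto simp: mdom_def z_def split: if_splits)
      have "d \<le> fst (R d)" "snd (R d) \<in> fst G (fst (R d))" using PR[OF db] unfolding P_def by auto
      then show "the (z d) \<in> fst G d" using db psh_cl[OF pG] by (simp add: z_def)
    next
      fix c' c assume "c' \<in> mdom z" "c \<le> c'"
      then have "c' < b" by (auto simp: mdom_def z_def split: if_splits)
      then show "snd G c' c (the (z c')) = the (z c)" using zcomp \<open>c \<le> c'\<close> by blast
    qed
    have "\<forall>d<b. mapf h z d = w d"
    proof (intro allI impI)
      fix d assume db: "d < b"
      have "mapf h z d = Some (the (w d))" using hz[OF db] db by (simp add: mapf_def z_def)
      then show "mapf h z d = w d" using match_dom[OF mw db] by auto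
    qed
    then have "mf_class H b (mapf h z) = Y"
      unfolding Y using class_eq_iff[OF match_mapf[OF n mz] mw] by simp
    then have "Y = plus_map H h b (mf_class G b z)" using plus_map_class[OF n mz] by simp
    moreover have "mf_class G b z \<in> plus_obj G b" using mz by (auto simp: plus_obj_def)
    ultimately show "Y \<in> plus_map H h b ` plus_obj G b" by blast
  qed
  show ?thesis unfolding bij_betw_def using injon img1 img2 by blast
qed

section \<open>Germs and stalks\<close>

lemma germ_mem: "(t, v) \<in> germ G x s u \<longleftrightarrow> x < t \<and> v \<in> fst G t \<and>
    (\<exists>r. x < r \<and> r \<le> s \<and> r \<le> t \<and> snd G s r u = snd G t r v)"
  by (simp add: germ_def)

lemma germ_refl: "presheaf G \<Longrightarrow> x < s \<Longrightarrow> u \<in> fst G s \<Longrightarrow> (s, u) \<in> germ G x s u"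
  unfolding germ_mem by blast

lemma gr_trans:
  fixes x :: "'a::linorder"
  assumes p: "presheaf G" and u: "u \<in> fst G s" and v: "v \<in> fst G t" and w: "w \<in> fst G q"
  and r0: "x < r0" "r0 \<le> s" "r0 \<le> t" "snd G s r0 u = snd G t r0 v"
  and r1: "x < r1" "r1 \<le> t" "r1 \<le> q" "snd G t r1 v = snd G q r1 w"
  shows "\<exists>r. x < r \<and> r \<le> s \<and> r \<le> q \<and> snd G s r u = snd G q r w"
proof -
  define m where "m = min r0 r1"
  have m: "x < m" "m \<le> r0" "m \<le> r1" using r0 r1 by (auto simp: m_def)
  have "snd G s m u = snd G r0 m (snd G s r0 u)" using psh_comp[OF p m(2) r0(2) u] by simp
  also have "\<dots> = snd G r0 m (snd G t r0 v)" using r0(4) by simp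
  also have "\<dots> = snd G t m v" using psh_comp[OF p m(2) r0(3) v] .
  also have "\<dots> = snd G r1 m (snd G t r1 v)" using psh_comp[OF p m(3) r1(2) v] by simp
  also have "\<dots> = snd G r1 m (snd G q r1 w)" using r1(4) by simp
  also have "\<dots> = snd G q m w" using psh_comp[OF p m(3) r1(3) w] .
  finally show ?thesis using m r0 r1 by (meson order_trans)
qed

lemma germ_eq:
  fixes x :: "'a::linorder"
  assumes p: "presheaf G" and u: "u \<in> fst G s" and tv: "(t, v) \<in> germ G x s u"
  shows "germ G x t v = germ G x s u"
proof -
  from tv obtain r0 where v: "v \<in> fst G t" and r0: "x < r0" "r0 \<le> s" "r0 \<le> t" "snd G s r0 u = snd G t r0 v"
    unfolding germ_mem by blast
  show ?thesis
  proof (intro set_eqI iffI)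
    fix z assume "z \<in> germ G x t v"
    then obtain t' v' r1 where z: "z = (t', v')" "x < t'" "v' \<in> fst G t'" and
      r1: "x < r1" "r1 \<le> t" "r1 \<le> t'" "snd G t r1 v = snd G t' r1 v'"
      unfolding germ_def by auto
    show "z \<in> germ G x s u" unfolding z germ_mem
      using z gr_trans[OF p u v z(3) r0 r1] by blast
  next
    fix z assume "z \<in> germ G x s u"
    then obtain t' v' r1 where z: "z = (t', v')" "x < t'" "v' \<in> fst G t'" and
      r1: "x < r1" "r1 \<le> s" "r1 \<le> t'" "snd G s r1 u = snd G t' r1 v'"
      unfolding germ_def by auto
    show "z \<in> germ G x t v" unfolding z germ_mem
      using z gr_trans[OF p v u z(3) r0(1,3,2) r0(4)[symmetric] r1] by blast
  qed
qed

lemma germ_in_stalk: "x < s \<Longrightarrow> u \<in> fst G s \<Longrightarrow> germ G x s u \<in> stalk G x"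
  unfolding stalk_def by blast

lemma stalk_map_germ:
  fixes x :: "'a::linorder"
  assumes n: "nat_trans G H h" and xs: "x < s" and u: "u \<in> fst G s"
  shows "stalk_map H h x (germ G x s u) = germ H x s (h s u)"
proof -
  have pG: "presheaf G" and pH: "presheaf H" using n by (auto dest: nt_ps1 nt_ps2)
  have hu: "h s u \<in> fst H s" using nt_in[OF n u] .
  have "\<And>t v. (t, v) \<in> germ G x s u \<Longrightarrow> germ H x t (h t v) = germ H x s (h s u)"
  proof -
    fix t v assume "(t, v) \<in> germ G x s u"
    then obtain r where tv: "x < t" "v \<in> fst G t" and r: "x < r" "r \<le> s" "r \<le> t" "snd G s r u = snd G t r v"
      unfolding germ_mem by blast
    have "snd H s r (h s u) = snd H t r (h t v)"
      using nt_nat[OF n r(2) u] nt_nat[OF n r(3) tv(2)] r(4) by simp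
    then have "(t, h t v) \<in> germ H x s (h s u)" unfolding germ_mem
      using tv r nt_in[OF n tv(2)] by blast
    then show "germ H x t (h t v) = germ H x s (h s u)" by (rule germ_eq[OF pH hu])
  qed
  then have "\<And>z. z \<in> germ G x s u \<Longrightarrow> (case z of (t, v) \<Rightarrow> germ H x t (h t v)) = germ H x s (h s u)"
    by (auto split: prod.splits)
  moreover have "(s, u) \<in> germ G x s u" by (rule germ_refl[OF pG xs u])
  ultimately show ?thesis unfolding stalk_map_def by (rule UN_const)
qed

lemma stalk_map_into: "nat_trans G H h \<Longrightarrow> C \<in> stalk G (x::'a::linorder) \<Longrightarrow> stalk_map H h x C \<in> stalk H x"
proof -
  assume n: "nat_trans G H h" and C: "C \<in> stalk G x"
  from C obtain s u where xs: "x < s" and u: "u \<in> fst G s" and Ce: "C = germ G x s u"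
    unfolding stalk_def by blast
  show ?thesis unfolding Ce stalk_map_germ[OF n xs u] by (rule germ_in_stalk[OF xs nt_in[OF n u]])
qed

lemma stalk_map_cong: "(\<And>a u. u \<in> fst G a \<Longrightarrow> h a u = h' a u) \<Longrightarrow> C \<in> stalk G x \<Longrightarrow>
    stalk_map H h x C = stalk_map H h' x C"
proof -
  assume e: "\<And>a u. u \<in> fst G a \<Longrightarrow> h a u = h' a u" and C: "C \<in> stalk G x"
  from C obtain s u where Ce: "C = germ G x s u" unfolding stalk_def by blast
  have "\<And>z. z \<in> C \<Longrightarrow> (case z of (t, v) \<Rightarrow> germ H x t (h t v)) = (case z of (t, v) \<Rightarrow> germ H x t (h' t v))"
    unfolding Ce germ_def using e by auto
  then show ?thesis unfolding stalk_map_def by (rule SUP_cong[OF refl])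
qed

lemma nt_comp: "nat_trans G H h \<Longrightarrow> nat_trans H K k \<Longrightarrow> nat_trans G K (\<lambda>a u. k a (h a u))"
  unfolding nat_trans_def by simp

lemma stalk_map_comp:
  assumes n1: "nat_trans G H h" and n2: "nat_trans H K k" and C: "C \<in> stalk G (x::'a::linorder)"
  shows "stalk_map K (\<lambda>a u. k a (h a u)) x C = stalk_map K k x (stalk_map H h x C)"
proof -
  from C obtain s u where xs: "x < s" and u: "u \<in> fst G s" and Ce: "C = germ G x s u"
    unfolding stalk_def by blast
  show ?thesis unfolding Ce stalk_map_germ[OF nt_comp[OF n1 n2] xs u] stalk_map_germ[OF n1 xs u]
    stalk_map_germ[OF n2 xs nt_in[OF n1 u]] ..
qed

lemma stalk_map_id: "presheaf G \<Longrightarrow> C \<in> stalk G (x::'a::linorder) \<Longrightarrow> stalk_map G (\<lambda>a u. u) x C = C"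
proof -
  assume p: "presheaf G" and C: "C \<in> stalk G x"
  from C obtain s u where xs: "x < s" and u: "u \<in> fst G s" and Ce: "C = germ G x s u"
    unfolding stalk_def by blast
  have idn: "nat_trans G G (\<lambda>a u. u)" using p unfolding nat_trans_def by simp
  show ?thesis unfolding Ce by (rule stalk_map_germ[OF idn xs u])
qed

lemma stalk_bij_inv:
  assumes n: "nat_trans G H h" and ng: "nat_trans H G g"
  and gh: "\<And>a u. u \<in> fst G a \<Longrightarrow> g a (h a u) = u"
  and hg: "\<And>a v. v \<in> fst H a \<Longrightarrow> h a (g a v) = v"
  shows "bij_betw (stalk_map H h x) (stalk G (x::'a::linorder)) (stalk H x)"
proof -
  have gh': "stalk_map G g x (stalk_map H h x C) = C" if C: "C \<in> stalk G x" for C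
  proof -
    have "stalk_map G g x (stalk_map H h x C) = stalk_map G (\<lambda>a u. g a (h a u)) x C"
      using stalk_map_comp[OF n ng C] by simp
    also have "\<dots> = stalk_map G (\<lambda>a u. u) x C" using gh C by (intro stalk_map_cong) auto
    also have "\<dots> = C" by (rule stalk_map_id[OF nt_ps1[OF n] C])
    finally show ?thesis .
  qed
  have hg': "stalk_map H h x (stalk_map G g x C) = C" if C: "C \<in> stalk H x" for C
  proof -
    have "stalk_map H h x (stalk_map G g x C) = stalk_map H (\<lambda>a u. h a (g a u)) x C"
      using stalk_map_comp[OF ng n C] by simp
    also have "\<dots> = stalk_map H (\<lambda>a u. u) x C" using hg C by (intro stalk_map_cong) auto
    also have "\<dots> = C" by (rule stalk_map_id[OF nt_ps1[OF ng] C])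
    finally show ?thesis .
  qed
  show ?thesis
  proof (rule bij_betwI')
    fix C D assume C: "C \<in> stalk G x" and D: "D \<in> stalk G x"
    show "(stalk_map H h x C = stalk_map H h x D) = (C = D)"
    proof
      assume "stalk_map H h x C = stalk_map H h x D"
      then have "stalk_map G g x (stalk_map H h x C) = stalk_map G g x (stalk_map H h x D)" by simp
      then show "C = D" using gh'[OF C] gh'[OF D] by simp
    qed simp
  next
    fix C assume "C \<in> stalk G x" then show "stalk_map H h x C \<in> stalk H x" by (rule stalk_map_into[OF n])
  next
    fix D assume D: "D \<in> stalk H x"
    show "\<exists>C\<in>stalk G x. D = stalk_map H h x C"
      using hg'[OF D] stalk_map_into[OF ng D] by (intro bexI[of _ "stalk_map G g x D"]) auto
  qed
qed

section \<open>Stalks of the plus construction\<close>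

lemma Lplus_simps: "fst (Lplus G) = plus_obj G" "snd (Lplus G) = plus_res G"
  by (simp_all add: Lplus_def)

lemma unit_stalk_bij:
  fixes G :: "('a::{complete_linorder,dense_order}, 'b) psh"
  assumes p: "presheaf G"
  shows "bij_betw (stalk_map (Lplus G) (plus_unit G) x) (stalk G x) (stalk (Lplus G) x)"
proof -
  have n: "nat_trans G (Lplus G) (plus_unit G)" by (rule nat_unit[OF p])
  have pL: "presheaf (Lplus G)" by (rule presheaf_Lplus)
  have injon: "inj_on (stalk_map (Lplus G) (plus_unit G) x) (stalk G x)"
  proof (rule inj_onI)
    fix C D assume C: "C \<in> stalk G x" and D: "D \<in> stalk G x"
      and e: "stalk_map (Lplus G) (plus_unit G) x C = stalk_map (Lplus G) (plus_unit G) x D"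
    from C obtain s u where xs: "x < s" and u: "u \<in> fst G s" and Ce: "C = germ G x s u"
      unfolding stalk_def by blast
    from D obtain t v where xt: "x < t" and v: "v \<in> fst G t" and De: "D = germ G x t v"
      unfolding stalk_def by blast
    have e2: "germ (Lplus G) x s (plus_unit G s u) = germ (Lplus G) x t (plus_unit G t v)"
      using e unfolding Ce De stalk_map_germ[OF n xs u] stalk_map_germ[OF n xt v] .
    have "(t, plus_unit G t v) \<in> germ (Lplus G) x t (plus_unit G t v)"
      by (rule germ_refl[OF pL xt nt_in[OF n v]])
    then have "(t, plus_unit G t v) \<in> germ (Lplus G) x s (plus_unit G s u)" using e2 by simp
    then obtain r where r: "x < r" "r \<le> s" "r \<le> t"
      "plus_res G s r (plus_unit G s u) = plus_res G t r (plus_unit G t v)"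
      unfolding germ_mem Lplus_simps by blast
    then have "plus_unit G r (snd G s r u) = plus_unit G r (snd G t r v)"
      using unit_res[OF p u r(2)] unit_res[OF p v r(3)] by simp
    then have "\<forall>c<r. full G r (snd G s r u) c = full G r (snd G t r v) c"
      unfolding plus_unit_full
      using class_eq_iff[OF match_full[OF p psh_cl[OF p r(2) u]] match_full[OF p psh_cl[OF p r(3) v]]]
      by simp
    moreover obtain c where xc: "x < c" and cr: "c < r" using dense r(1) by blast
    ultimately have "full G r (snd G s r u) c = full G r (snd G t r v) c" by blast
    then have "snd G r c (snd G s r u) = snd G r c (snd G t r v)" using less_imp_le[OF cr] by (simp add: full_def)
    then have eq: "snd G s c u = snd G t c v"
      using psh_comp[OF p _ r(2) u, of c] psh_comp[OF p _ r(3) v, of c] cr by simp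
    have "(t, v) \<in> germ G x s u" unfolding germ_mem
      using xt v xc cr r eq by (meson order.strict_implies_order order_trans)
    then show "C = D" unfolding Ce De using germ_eq[OF p u] by simp
  qed
  have img: "stalk (Lplus G) x \<subseteq> stalk_map (Lplus G) (plus_unit G) x ` stalk G x"
  proof
    fix Y assume "Y \<in> stalk (Lplus G) x"
    then obtain s X where xs: "x < s" and X: "X \<in> plus_obj G s" and Ye: "Y = germ (Lplus G) x s X"
      unfolding stalk_def Lplus_simps by blast
    from X obtain y where my: "matching G s y" and Xe: "X = mf_class G s y" by (auto simp: plus_obj_def)
    obtain r where xr: "x < r" and rs: "r < s" using dense xs by blast
    have yr: "y r \<noteq> None" by (rule match_dom[OF my rs])
    define w where "w = the (y r)"
    have w: "w \<in> fst G r" unfolding w_def by (rule match_val[OF my yr])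
    have "mf_res r y = full G r w"
    proof
      fix c show "mf_res r y c = full G r w c"
      proof (cases "c \<le> r")
        case True
        then have "y c \<noteq> None" using match_down[OF my yr] by blast
        moreover have "snd G r c w = the (y c)" unfolding w_def using match_comp[OF my yr True] .
        ultimately show ?thesis using True by (auto simp: mf_res_def full_def)
      qed (simp add: mf_res_def full_def)
    qed
    then have pr: "plus_res G s r X = plus_unit G r w"
      unfolding Xe plus_res_class[OF my order.strict_implies_order[OF rs]] plus_unit_full by simp
    have uo: "plus_unit G r w \<in> plus_obj G r" by (rule unit_obj[OF p w])
    have "plus_res G r r (plus_unit G r w) = plus_unit G r w"
      using psh_id[OF pL, of "plus_unit G r w" r] uo unfolding Lplus_simps by simp
    then have "(r, plus_unit G r w) \<in> germ (Lplus G) x s X"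
      unfolding germ_mem Lplus_simps using xr rs uo pr by (auto intro!: exI[of _ r])
    then have "germ (Lplus G) x r (plus_unit G r w) = Y"
      unfolding Ye using germ_eq[OF pL] X unfolding Lplus_simps by blast
    then have "Y = stalk_map (Lplus G) (plus_unit G) x (germ G x r w)"
      using stalk_map_germ[OF n xr w] by simp
    moreover have "germ G x r w \<in> stalk G x" by (rule germ_in_stalk[OF xr w])
    ultimately show "Y \<in> stalk_map (Lplus G) (plus_unit G) x ` stalk G x" by blast
  qed
  have "stalk_map (Lplus G) (plus_unit G) x ` stalk G x \<subseteq> stalk (Lplus G) x"
    using stalk_map_into[OF n] by blast
  then show ?thesis unfolding bij_betw_def using injon img by blast
qed

lemma iso_of_bij:
  assumes n: "nat_trans G H h" and b: "\<And>a. bij_betw (h a) (fst G a) (fst H a)"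
  shows "psh_iso G H h"
proof -
  define g where "g = (\<lambda>a. the_inv_into (fst G a) (h a))"
  have inj: "\<And>a. inj_on (h a) (fst G a)" using b by (simp add: bij_betw_def)
  have gin: "g a v \<in> fst G a" if "v \<in> fst H a" for a v
    using bij_betwE[OF bij_betw_the_inv_into[OF b[of a]]] that unfolding g_def by blast
  have hg: "h a (g a v) = v" if "v \<in> fst H a" for a v
    unfolding g_def using f_the_inv_into_f[OF inj] that bij_betw_imp_surj_on[OF b[of a]] by blast
  have gh: "g a (h a u) = u" if "u \<in> fst G a" for a u
    unfolding g_def using the_inv_into_f_f[OF inj that] .
  have ng: "nat_trans H G g" unfolding nat_trans_def
  proof (intro conjI allI impI)
    show "presheaf H" by (rule nt_ps2[OF n])
    show "presheaf G" by (rule nt_ps1[OF n])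
  next
    fix a v assume "v \<in> fst H a" then show "g a v \<in> fst G a" by (rule gin)
  next
    fix a b v assume ba: "b \<le> a" and v: "v \<in> fst H a"
    define u where "u = g a v"
    have u: "u \<in> fst G a" unfolding u_def by (rule gin[OF v])
    have "g b (snd H a b v) = g b (snd H a b (h a u))" unfolding u_def using hg[OF v] by simp
    also have "\<dots> = g b (h b (snd G a b u))" using nt_nat[OF n ba u] by simp
    also have "\<dots> = snd G a b u" using gh psh_cl[OF nt_ps1[OF n] ba u] by simp
    finally show "g b (snd H a b v) = snd G a b (g a v)" unfolding u_def .
  qed
  show ?thesis unfolding psh_iso_def using n ng gh hg by blast
qed

section \<open>The associated sheaf\<close>

lemma eta_alt: "eta F = (\<lambda>a u. plus_unit (Lplus F) a (plus_unit F a u))"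
  by (simp add: eta_def fun_eq_iff)

lemma nat_eta: "presheaf (F::('a::{complete_linorder,dense_order}, 'b) psh) \<Longrightarrow> nat_trans F (L2 F) (eta F)"
  unfolding L2_def eta_alt by (rule nt_comp[OF nat_unit nat_unit[OF presheaf_Lplus]])

lemma L2_stalk_bij:
  fixes F :: "('a::{complete_linorder,dense_order}, 'b) psh"
  assumes p: "presheaf F"
  shows "bij_betw (stalk_map (L2 F) (eta F) x) (stalk F x) (stalk (L2 F) x)"
proof -
  have "bij_betw (stalk_map (Lplus (Lplus F)) (plus_unit (Lplus F)) x \<circ> stalk_map (Lplus F) (plus_unit F) x)
      (stalk F x) (stalk (Lplus (Lplus F)) x)"
    by (rule bij_betw_trans[OF unit_stalk_bij[OF p] unit_stalk_bij[OF presheaf_Lplus]])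
  moreover have "\<And>C. C \<in> stalk F x \<Longrightarrow> stalk_map (L2 F) (eta F) x C =
      (stalk_map (Lplus (Lplus F)) (plus_unit (Lplus F)) x \<circ> stalk_map (Lplus F) (plus_unit F) x) C"
    unfolding L2_def eta_alt comp_def
    by (rule stalk_map_comp[OF nat_unit[OF p] nat_unit[OF presheaf_Lplus]])
  then have "bij_betw (stalk_map (L2 F) (eta F) x) (stalk F x) (stalk (Lplus (Lplus F)) x) =
      bij_betw (stalk_map (Lplus (Lplus F)) (plus_unit (Lplus F)) x \<circ> stalk_map (Lplus F) (plus_unit F) x)
      (stalk F x) (stalk (Lplus (Lplus F)) x)" by (rule bij_betw_cong)
  ultimately show ?thesis unfolding L2_def by simp
qed

lemma eta_natural:
  fixes E :: "('a::{complete_linorder,dense_order}, 'b) psh"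
  assumes n: "nat_trans E F f" and u: "u \<in> fst E a"
  shows "L2_map F f a (eta E a u) = eta F a (f a u)"
proof -
  have pE: "presheaf E" by (rule nt_ps1[OF n])
  have uo: "plus_unit E a u \<in> fst (Lplus E) a" unfolding Lplus_simps by (rule unit_obj[OF pE u])
  show ?thesis unfolding L2_map_def eta_def
    plus_map_unit[OF nat_plus_map[OF n] uo] plus_map_unit[OF n u] ..
qed

section \<open>From stalks to local injectivity and surjectivity\<close>

lemma stalk_INJ:
  fixes E :: "('a::{complete_linorder,dense_order}, 'b) psh"
  assumes n: "nat_trans E F f"
  and st: "\<forall>x. x \<noteq> top \<longrightarrow> bij_betw (stalk_map F f x) (stalk E x) (stalk F x)"
  and dc: "d < c" and u: "u \<in> fst E c" and u': "u' \<in> fst E c" and e: "f c u = f c u'"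
  shows "snd E c d u = snd E c d u'"
proof -
  have pE: "presheaf E" by (rule nt_ps1[OF n])
  have "d \<noteq> top" using dc top_greatest[of c] by auto
  then have inj: "inj_on (stalk_map F f d) (stalk E d)" using st bij_betw_imp_inj_on by blast
  have "stalk_map F f d (germ E d c u) = stalk_map F f d (germ E d c u')"
    using stalk_map_germ[OF n dc u] stalk_map_germ[OF n dc u'] e by simp
  then have "germ E d c u = germ E d c u'"
    using inj_onD[OF inj] germ_in_stalk[OF dc u] germ_in_stalk[OF dc u'] by blast
  moreover have "(c, u') \<in> germ E d c u'" by (rule germ_refl[OF pE dc u'])
  ultimately have "(c, u') \<in> germ E d c u" by simp
  then obtain r where r: "d < r" "r \<le> c" "snd E c r u = snd E c r u'" unfolding germ_mem by blast
  have "snd E c d u = snd E r d (snd E c r u)" using psh_comp[OF pE _ r(2) u, of d] r(1) by simp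
  also have "\<dots> = snd E r d (snd E c r u')" using r(3) by simp
  also have "\<dots> = snd E c d u'" using psh_comp[OF pE _ r(2) u', of d] r(1) by simp
  finally show ?thesis .
qed

lemma stalk_SURJ:
  fixes E :: "('a::{complete_linorder,dense_order}, 'b) psh"
  assumes n: "nat_trans E F f"
  and st: "\<forall>x. x \<noteq> top \<longrightarrow> bij_betw (stalk_map F f x) (stalk E x) (stalk F x)"
  and dc: "d < c" and w: "w \<in> fst F c"
  shows "\<exists>r v. d < r \<and> r \<le> c \<and> v \<in> fst E r \<and> f r v = snd F c r w"
proof -
  have pE: "presheaf E" by (rule nt_ps1[OF n])
  have pF: "presheaf F" by (rule nt_ps2[OF n])
  have "d \<noteq> top" using dc top_greatest[of c] by auto
  then have sur: "stalk_map F f d ` stalk E d = stalk F d" using st bij_betw_imp_surj_on by blast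
  have "germ F d c w \<in> stalk F d" by (rule germ_in_stalk[OF dc w])
  then obtain C where C: "C \<in> stalk E d" and Ce: "germ F d c w = stalk_map F f d C"
    using sur by (metis imageE)
  from C obtain s u where ds: "d < s" and u: "u \<in> fst E s" and Ce2: "C = germ E d s u"
    unfolding stalk_def by blast
  have eq: "germ F d c w = germ F d s (f s u)" using Ce Ce2 stalk_map_germ[OF n ds u] by simp
  have "(c, w) \<in> germ F d c w" by (rule germ_refl[OF pF dc w])
  then have "(c, w) \<in> germ F d s (f s u)" using eq by simp
  then obtain r where r: "d < r" "r \<le> s" "r \<le> c" "snd F s r (f s u) = snd F c r w"
    unfolding germ_mem by blast
  have "f r (snd E s r u) = snd F c r w" using nt_nat[OF n r(2) u] r(4) by simp
  then show ?thesis using r psh_cl[OF pE r(2) u] by blast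
qed

theorem lemma34:
  shows "(\<forall>F :: ('a::{complete_linorder, dense_order}, 'b) psh. presheaf F \<longrightarrow>
            (\<forall>x. x \<noteq> top \<longrightarrow>
               bij_betw (stalk_map (L2 F) (eta F) x) (stalk F x) (stalk (L2 F) x)))
       \<and> (\<forall>(E :: ('a, 'c) psh) (F :: ('a, 'd) psh) f. nat_trans E F f \<longrightarrow>
            ((\<forall>x. x \<noteq> top \<longrightarrow> bij_betw (stalk_map F f x) (stalk E x) (stalk F x))
             \<longleftrightarrow> psh_iso (L2 E) (L2 F) (L2_map F f)))"
proof (intro conjI allI impI)
  fix F :: "('a, 'b) psh" and x :: 'a
  assume "presheaf F"
  then show "bij_betw (stalk_map (L2 F) (eta F) x) (stalk F x) (stalk (L2 F) x)"
    by (rule L2_stalk_bij)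
next
  fix E :: "('a, 'c) psh" and F :: "('a, 'd) psh" and f
  assume n: "nat_trans E F f"
  have pE: "presheaf E" by (rule nt_ps1[OF n])
  have pF: "presheaf F" by (rule nt_ps2[OF n])
  have n1: "nat_trans (Lplus E) (Lplus F) (plus_map F f)" by (rule nat_plus_map[OF n])
  have nL: "nat_trans (L2 E) (L2 F) (L2_map F f)"
    unfolding L2_def L2_map_def by (rule nat_plus_map[OF n1])
  show "(\<forall>x. x \<noteq> top \<longrightarrow> bij_betw (stalk_map F f x) (stalk E x) (stalk F x))
        \<longleftrightarrow> psh_iso (L2 E) (L2 F) (L2_map F f)"
  proof
    assume st: "\<forall>x. x \<noteq> top \<longrightarrow> bij_betw (stalk_map F f x) (stalk E x) (stalk F x)"
    have b1: "bij_betw (plus_map F f b) (plus_obj E b) (plus_obj F b)" for b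
      by (rule plus_map_bij[OF n stalk_INJ[OF n st] stalk_SURJ[OF n st]])
    have b2: "bij_betw (plus_map (Lplus F) (plus_map F f) a) (plus_obj (Lplus E) a) (plus_obj (Lplus F) a)" for a
    proof (rule plus_map_bij[OF n1])
      fix d c u u' assume u: "u \<in> fst (Lplus E) c" and u': "u' \<in> fst (Lplus E) c"
        and e: "plus_map F f c u = plus_map F f c u'"
      have "u = u'" using inj_onD[OF bij_betw_imp_inj_on[OF b1[of c]] e] u u' unfolding Lplus_simps by simp
      then show "snd (Lplus E) c d u = snd (Lplus E) c d u'" by simp
    next
      fix d c w assume dc: "d < c" and w: "w \<in> fst (Lplus F) c"
      have "w \<in> plus_map F f c ` plus_obj E c"
        using bij_betw_imp_surj_on[OF b1[of c]] w unfolding Lplus_simps by simp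
      then obtain v where v: "v \<in> plus_obj E c" "plus_map F f c v = w" by (auto elim!: imageE)
      have "snd (Lplus F) c c w = w" by (rule psh_id[OF presheaf_Lplus w])
      then show "\<exists>r v. d < r \<and> r \<le> c \<and> v \<in> fst (Lplus E) r \<and> plus_map F f r v = snd (Lplus F) c r w"
        using dc v unfolding Lplus_simps by (intro exI[of _ c] exI[of _ v]) simp
    qed
    show "psh_iso (L2 E) (L2 F) (L2_map F f)"
    proof (rule iso_of_bij[OF nL])
      fix a show "bij_betw (L2_map F f a) (fst (L2 E) a) (fst (L2 F) a)"
        unfolding L2_def L2_map_def Lplus_simps by (rule b2)
    qed
  next
    assume iso: "psh_iso (L2 E) (L2 F) (L2_map F f)"
    have "\<exists>g. nat_trans (L2 F) (L2 E) g \<and> (\<forall>a u. u \<in> fst (L2 E) a \<longrightarrow> g a (L2_map F f a u) = u) \<and>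
          (\<forall>a v. v \<in> fst (L2 F) a \<longrightarrow> L2_map F f a (g a v) = v)"
      using iso unfolding psh_iso_def by (rule conjunct2)
    then obtain g where ng: "nat_trans (L2 F) (L2 E) g"
      and gh0: "\<forall>a u. u \<in> fst (L2 E) a \<longrightarrow> g a (L2_map F f a u) = u"
      and hg0: "\<forall>a v. v \<in> fst (L2 F) a \<longrightarrow> L2_map F f a (g a v) = v" by blast
    have gh: "\<And>a u. u \<in> fst (L2 E) a \<Longrightarrow> g a (L2_map F f a u) = u" using gh0 by simp
    have hg: "\<And>a v. v \<in> fst (L2 F) a \<Longrightarrow> L2_map F f a (g a v) = v" using hg0 by simp
    show "\<forall>x. x \<noteq> top \<longrightarrow> bij_betw (stalk_map F f x) (stalk E x) (stalk F x)"
    proof (intro allI impI)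
      fix x :: 'a
      have sb: "bij_betw (stalk_map (L2 F) (L2_map F f) x) (stalk (L2 E) x) (stalk (L2 F) x)"
        by (rule stalk_bij_inv[OF nL ng gh hg])
      have bE: "bij_betw (stalk_map (L2 E) (eta E) x) (stalk E x) (stalk (L2 E) x)"
        by (rule L2_stalk_bij[OF pE])
      have bF: "bij_betw (stalk_map (L2 F) (eta F) x) (stalk F x) (stalk (L2 F) x)"
        by (rule L2_stalk_bij[OF pF])
      have c1: "bij_betw (stalk_map (L2 F) (L2_map F f) x \<circ> stalk_map (L2 E) (eta E) x) (stalk E x) (stalk (L2 F) x)"
        by (rule bij_betw_trans[OF bE sb])
      have eq: "(stalk_map (L2 F) (L2_map F f) x \<circ> stalk_map (L2 E) (eta E) x) C =
                (stalk_map (L2 F) (eta F) x \<circ> stalk_map F f x) C" if C: "C \<in> stalk E x" for C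
      proof -
        have "(stalk_map (L2 F) (L2_map F f) x \<circ> stalk_map (L2 E) (eta E) x) C
            = stalk_map (L2 F) (\<lambda>a u. L2_map F f a (eta E a u)) x C"
          using stalk_map_comp[OF nat_eta[OF pE] nL C] by simp
        also have "\<dots> = stalk_map (L2 F) (\<lambda>a u. eta F a (f a u)) x C"
          using eta_natural[OF n] C by (intro stalk_map_cong) auto
        also have "\<dots> = (stalk_map (L2 F) (eta F) x \<circ> stalk_map F f x) C"
          using stalk_map_comp[OF n nat_eta[OF pF] C] by simp
        finally show ?thesis .
      qed
      have c2: "bij_betw (stalk_map (L2 F) (eta F) x \<circ> stalk_map F f x) (stalk E x) (stalk (L2 F) x)"
      proof -
        have "bij_betw (stalk_map (L2 F) (L2_map F f) x \<circ> stalk_map (L2 E) (eta E) x) (stalk E x) (stalk (L2 F) x) =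
              bij_betw (stalk_map (L2 F) (eta F) x \<circ> stalk_map F f x) (stalk E x) (stalk (L2 F) x)"
          by (rule bij_betw_cong) (rule eq)
        then show ?thesis using c1 by simp
      qed
      have img: "stalk_map F f x ` stalk E x \<subseteq> stalk F x"
        by (rule image_subsetI, rule stalk_map_into[OF n])
      show "bij_betw (stalk_map F f x) (stalk E x) (stalk F x)"
        by (rule bij_betw_comp_iff2[OF bF img, THEN iffD2, OF c2])
    qed
  qed
qed

end
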